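(* Let $\pi,\rho\in S_k$. Then: (1) $\kappa^\rho_\pi(\mathbf w)$ is a rational function with at most simple poles at $w_i=w_j$ ($i<j$) and no other singularities; i.e. $\prod_{i<j}(w_j-w_i)\kappa^\rho_\pi(\mathbf w)$ is a polynomial in $w_1,\dots,w_k$. (2) If $a<b$ and $\rho^{-1}(a)>\rho^{-1}(b)$, then $\kappa^\rho_\pi(\mathbf w)|_{w_a=z,\,w_b=qz}=0$. (3) If $\pi(\rho^{-1}(a))<a$ then $\kappa^\rho_\pi(\mathbf w)|_{w_a=0}=0$; if $\pi(\rho^{-1}(a))>a$ then $\kappa^\rho_\pi(\mathbf w)|_{w_a\to\infty}=0$.
   Context: $q$ is a fixed parameter (in $(0,1)$). For $\rho\in S_k$, $t_\rho f(w_1,\dots,w_k)=f(w_{\rho(1)},\dots,w_{\rho(k)})$; $T_i=q+\frac{w_{i+1}-qw_i}{w_{i+1}-w_i}(t_{\sigma_i}-1)$ where $\sigma_i$ is the transposition of $i,i+1$; $T_\pi=T_{i_1}\cdots T_{i_l}$ for a reduced word $\pi=\sigma_{i_1}\cdots\sigma_{i_l}$. The rational functions $\kappa^\rho_\pi(\mathbf w)$ are defined by $T_\pi=\sum_{\rho\in S_k}\kappa^\rho_\pi(\mathbf w)t_\rho$. *)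

theory Defs
  imports "HOL-Analysis.Analysis" "HOL-Combinatorics.Combinatorics"
begin

text \<open>Indices are 0-based: variables w 0, ..., w (k-1); permutations of {..<k};
  the simple transposition sigma_i swaps i and i+1 (for i+1 < k).
  A point w is a function nat => complex; t_rho f (w) = f (w o rho).\<close>

definition sigma :: "nat \<Rightarrow> nat \<Rightarrow> nat" where
  "sigma i = Transposition.transpose i (Suc i)"

definition word_perm :: "nat list \<Rightarrow> nat \<Rightarrow> nat" where
  "word_perm is = foldr (\<lambda>i p. sigma i \<circ> p) is id"

definition valid_word :: "nat \<Rightarrow> nat list \<Rightarrow> bool" where
  "valid_word k is \<longleftrightarrow> (\<forall>i\<in>set is. Suc i < k)"

definition reduced_word :: "nat \<Rightarrow> nat list \<Rightarrow> (nat \<Rightarrow> nat) \<Rightarrow> bool" where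
  "reduced_word k is \<pi> \<longleftrightarrow> valid_word k is \<and> word_perm is = \<pi> \<and>
     (\<forall>js. valid_word k js \<and> word_perm js = \<pi> \<longrightarrow> length is \<le> length js)"

definition T_op :: "real \<Rightarrow> nat \<Rightarrow> ((nat \<Rightarrow> complex) \<Rightarrow> complex) \<Rightarrow> (nat \<Rightarrow> complex) \<Rightarrow> complex" where
  "T_op q i f w = of_real q * f w
     + ((w (Suc i) - of_real q * w i) / (w (Suc i) - w i)) * (f (w \<circ> sigma i) - f w)"

fun T_word :: "real \<Rightarrow> nat list \<Rightarrow> ((nat \<Rightarrow> complex) \<Rightarrow> complex) \<Rightarrow> (nat \<Rightarrow> complex) \<Rightarrow> complex" where
  "T_word q [] f = f"
| "T_word q (i # is) f = T_op q i (T_word q is f)"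

text \<open>kappa: the coefficients in T_pi = sum_rho kappa^rho_pi(w) t_rho, evaluated at a point w
  with pairwise distinct coordinates (where the coefficients are uniquely determined).\<close>
definition kappa :: "nat \<Rightarrow> real \<Rightarrow> nat list \<Rightarrow> (nat \<Rightarrow> nat) \<Rightarrow> (nat \<Rightarrow> complex) \<Rightarrow> complex" where
  "kappa k q is \<rho> w =
     (THE c. (\<forall>\<tau>. \<not> \<tau> permutes {..<k} \<longrightarrow> c \<tau> = 0) \<and>
        (\<forall>f. T_word q is f w = (\<Sum>\<tau>\<in>{\<tau>. \<tau> permutes {..<k}}. c \<tau> * f (w \<circ> \<tau>)))) \<rho>"

end

theory Submission
  imports Defs
begin

lemma sigma_sigma[simp]: "sigma i \<circ> sigma i = id"
  by (simp add: sigma_def)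

lemma sigma_sigma_app[simp]: "sigma i (sigma i x) = x"
  by (simp add: sigma_def)

lemma sigma_permutes: "Suc i < k \<Longrightarrow> sigma i permutes {..<k}"
  unfolding sigma_def by (rule permutes_swap_id) auto

lemma sigma_lt: "Suc i < k \<Longrightarrow> x < k \<Longrightarrow> sigma i x < k"
  by (auto simp: sigma_def Transposition.transpose_def)

definition Bc :: "real \<Rightarrow> nat \<Rightarrow> (nat \<Rightarrow> complex) \<Rightarrow> complex" where
  "Bc q i w = (w (Suc i) - of_real q * w i) / (w (Suc i) - w i)"

fun coef :: "real \<Rightarrow> nat list \<Rightarrow> (nat \<Rightarrow> nat) \<Rightarrow> (nat \<Rightarrow> complex) \<Rightarrow> complex" where
  "coef q [] \<tau> w = (if \<tau> = id then 1 else 0)"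
| "coef q (i # is) \<tau> w = (of_real q - Bc q i w) * coef q is \<tau> w
      + Bc q i w * coef q is (sigma i \<circ> \<tau>) (w \<circ> sigma i)"

lemma coef_nonperm:
  "valid_word k is \<Longrightarrow> \<not> \<tau> permutes {..<k} \<Longrightarrow> coef q is \<tau> w = 0"
proof (induction "is" arbitrary: \<tau> w)
  case Nil
  then show ?case by (metis coef.simps(1) permutes_id)
next
  case (Cons i "is")
  have v: "valid_word k is" "Suc i < k" using Cons.prems by (auto simp: valid_word_def)
  have "\<not> (sigma i \<circ> \<tau>) permutes {..<k}"
  proof
    assume "(sigma i \<circ> \<tau>) permutes {..<k}"
    then have "(sigma i \<circ> (sigma i \<circ> \<tau>)) permutes {..<k}"
      by (rule permutes_compose) (rule sigma_permutes[OF v(2)])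
    then show False using Cons.prems by (simp add: o_assoc)
  qed
  then show ?case using Cons v by simp
qed

lemma T_word_repr:
  "valid_word k is \<Longrightarrow>
   T_word q is f w = (\<Sum>\<tau>\<in>{\<tau>. \<tau> permutes {..<k}}. coef q is \<tau> w * f (w \<circ> \<tau>))"
proof (induction "is" arbitrary: w)
  case Nil
  have "(\<Sum>\<tau>\<in>{\<tau>. \<tau> permutes {..<k}}. coef q [] \<tau> w * f (w \<circ> \<tau>))
      = (\<Sum>\<tau>\<in>{\<tau>. \<tau> permutes {..<k}}. (if \<tau> = id then f w else 0))"
    by (rule sum.cong) auto
  also have "\<dots> = f w"
    using permutes_id[of "{..<k}"] by (simp add: sum.delta finite_permutations)
  finally show ?case by (metis T_word.simps(1))
next
  case (Cons i "is")
  have v: "valid_word k is" "Suc i < k" using Cons.prems by (auto simp: valid_word_def)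
  let ?P = "{\<tau>. \<tau> permutes {..<k}}"
  let ?g = "T_word q is f"
  have "T_word q (i # is) f w = (of_real q - Bc q i w) * ?g w + Bc q i w * ?g (w \<circ> sigma i)"
    unfolding T_word.simps T_op_def Bc_def[symmetric] by (simp add: algebra_simps)
  also have "?g (w \<circ> sigma i) = (\<Sum>\<tau>\<in>?P. coef q is \<tau> (w \<circ> sigma i) * f (w \<circ> sigma i \<circ> \<tau>))"
    by (rule Cons.IH[OF v(1)])
  also have "\<dots> = (\<Sum>\<tau>\<in>?P. coef q is (sigma i \<circ> \<tau>) (w \<circ> sigma i) * f (w \<circ> \<tau>))"
  proof (rule sum.reindex_bij_witness[where i="\<lambda>\<tau>. sigma i \<circ> \<tau>" and j="\<lambda>\<tau>. sigma i \<circ> \<tau>"])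
    fix a assume "a \<in> ?P"
    then show "sigma i \<circ> (sigma i \<circ> a) = a" "sigma i \<circ> a \<in> ?P"
      using permutes_compose[OF _ sigma_permutes[OF v(2)]] by (auto simp: o_assoc)
  next
    fix a assume "a \<in> ?P"
    then show "sigma i \<circ> (sigma i \<circ> a) = a" "sigma i \<circ> a \<in> ?P"
      using permutes_compose[OF _ sigma_permutes[OF v(2)]] by (auto simp: o_assoc)
  next
    fix a assume "a \<in> ?P"
    show "coef q is (sigma i \<circ> (sigma i \<circ> a)) (w \<circ> sigma i) * f (w \<circ> (sigma i \<circ> a)) =
          coef q is a (w \<circ> sigma i) * f (w \<circ> sigma i \<circ> a)"
      by (simp add: o_assoc)
  qed
  finally show ?case
    using Cons.IH[OF v(1)]
    by (simp add: sum_distrib_left sum.distrib[symmetric] algebra_simps comp_def)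
qed

lemma kappa_coef:
  assumes v: "valid_word k is" and inj: "inj_on w {..<k}"
  shows "kappa k q is \<rho> w = coef q is \<rho> w"
proof -
  let ?P = "{\<tau>. \<tau> permutes {..<k}}"
  let ?c = "\<lambda>\<tau>. coef q is \<tau> w"
  have c0: "(\<forall>\<tau>. \<not> \<tau> permutes {..<k} \<longrightarrow> ?c \<tau> = 0) \<and>
        (\<forall>f. T_word q is f w = (\<Sum>\<tau>\<in>?P. ?c \<tau> * f (w \<circ> \<tau>)))"
    using coef_nonperm[OF v] T_word_repr[OF v] by blast
  have eqw: "w \<circ> \<tau> = w \<circ> \<sigma> \<longleftrightarrow> \<tau> = \<sigma>" if "\<tau> permutes {..<k}" "\<sigma> permutes {..<k}" for \<tau> \<sigma>
  proof
    assume h: "w \<circ> \<tau> = w \<circ> \<sigma>"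
    show "\<tau> = \<sigma>"
    proof
      fix x show "\<tau> x = \<sigma> x"
      proof (cases "x < k")
        case True
        then have "\<tau> x < k" "\<sigma> x < k" using that permutes_in_image by fastforce+
        moreover have "w (\<tau> x) = w (\<sigma> x)" using h by (metis comp_apply)
        ultimately show ?thesis using inj by (auto dest: inj_onD)
      next
        case False
        then show ?thesis using that by (simp add: permutes_not_in)
      qed
    qed
  qed simp
  have uniq: "c = ?c" if h: "(\<forall>\<tau>. \<not> \<tau> permutes {..<k} \<longrightarrow> c \<tau> = 0) \<and>
        (\<forall>f. T_word q is f w = (\<Sum>\<tau>\<in>?P. c \<tau> * f (w \<circ> \<tau>)))" for c
  proof
    fix \<rho> show "c \<rho> = ?c \<rho>"
    proof (cases "\<rho> permutes {..<k}")
      case False then show ?thesis using h c0 by auto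
    next
      case True
      define f where "f = (\<lambda>v. if v = w \<circ> \<rho> then (1::complex) else 0)"
      have s: "(\<Sum>\<tau>\<in>?P. d \<tau> * f (w \<circ> \<tau>)) = d \<rho>" for d :: "(nat \<Rightarrow> nat) \<Rightarrow> complex"
      proof -
        have "(\<Sum>\<tau>\<in>?P. d \<tau> * f (w \<circ> \<tau>)) = (\<Sum>\<tau>\<in>?P. if \<tau> = \<rho> then d \<tau> else 0)"
          by (rule sum.cong) (auto simp: f_def eqw True)
        also have "\<dots> = d \<rho>" using True by (simp add: sum.delta finite_permutations)
        finally show ?thesis .
      qed
      have "c \<rho> = T_word q is f w" using h s by metis
      also have "\<dots> = ?c \<rho>" using c0 s by metis
      finally show ?thesis .
    qed
  qed
  have "(THE c. (\<forall>\<tau>. \<not> \<tau> permutes {..<k} \<longrightarrow> c \<tau> = 0) \<and>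
        (\<forall>f. T_word q is f w = (\<Sum>\<tau>\<in>?P. c \<tau> * f (w \<circ> \<tau>)))) = ?c"
    apply (rule the_equality) apply (rule c0) apply (erule uniq) done
  then show ?thesis unfolding kappa_def by simp
qed

definition Ac :: "real \<Rightarrow> nat \<Rightarrow> (nat \<Rightarrow> complex) \<Rightarrow> complex" where
  "Ac q i w = of_real q - Bc q i w"

lemma sigma_comp_eq_id: "sigma j \<circ> \<rho> = id \<longleftrightarrow> \<rho> = sigma j"
proof
  assume "sigma j \<circ> \<rho> = id"
  then have "sigma j \<circ> (sigma j \<circ> \<rho>) = sigma j" by simp
  then show "\<rho> = sigma j" by (simp add: o_assoc)
qed simp

lemma comp_sigma_eq_id: "\<rho> \<circ> sigma j = id \<longleftrightarrow> \<rho> = sigma j"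
proof
  assume "\<rho> \<circ> sigma j = id"
  then have "(\<rho> \<circ> sigma j) \<circ> sigma j = sigma j" by simp
  then show "\<rho> = sigma j" by (simp add: o_assoc[symmetric])
qed (simp)

lemma sigma_neq_id[simp]: "sigma j \<noteq> id"
  by (simp add: sigma_def transpose_eq_id_iff)

lemma sigma_neq_id'[simp]: "id \<noteq> sigma j" "(\<lambda>a. a) \<noteq> sigma j"
  using sigma_neq_id[of j] unfolding id_def by auto

lemma coef_snoc:
  "coef q (is @ [j]) \<rho> w = coef q is \<rho> w * Ac q j (w \<circ> \<rho>)
     + coef q is (\<rho> \<circ> sigma j) w * Bc q j (w \<circ> \<rho> \<circ> sigma j)"
proof (induction "is" arbitrary: \<rho> w)
  case Nil
  show ?case
  proof (cases "\<rho> = id")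
    case True then show ?thesis using sigma_neq_id[of j] by (simp add: Ac_def sigma_comp_eq_id comp_sigma_eq_id)
  next
    case False
    show ?thesis
    proof (cases "\<rho> = sigma j")
      case True then show ?thesis using sigma_neq_id[of j] by (simp add: Ac_def o_assoc[symmetric] id_def[symmetric])
    next
      case False2: False
      have h1: "\<rho> \<circ> sigma j \<noteq> id" using False2 comp_sigma_eq_id by blast
      have h2: "sigma j \<circ> \<rho> \<noteq> id" using False2 sigma_comp_eq_id by blast
      show ?thesis using False h1 h2 by (simp add: comp_def)
    qed
  qed
next
  case (Cons i "is")
  have e1: "w \<circ> sigma i \<circ> (sigma i \<circ> \<rho>) = w \<circ> \<rho>" by (rule ext) simp
  have e2: "w \<circ> sigma i \<circ> (sigma i \<circ> \<rho> \<circ> sigma j) = w \<circ> \<rho> \<circ> sigma j"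
    by (rule ext) simp
  have e3: "sigma i \<circ> \<rho> \<circ> sigma j = sigma i \<circ> (\<rho> \<circ> sigma j)" by (simp add: o_assoc)
  show ?case
    unfolding append_Cons coef.simps(2) Cons.IH[of \<rho> w] Cons.IH[of "sigma i \<circ> \<rho>" "w \<circ> sigma i"] e1 e2 e3
    by (simp add: algebra_simps comp_def)
qed

lemma inv_comp_sigma: "\<rho> permutes S \<Longrightarrow> inv (\<rho> \<circ> sigma j) x = sigma j (inv \<rho> x)"
  by (simp add: o_inv_distrib permutes_bij sigma_def)

lemma valid_snoc: "valid_word k (is @ [j]) \<longleftrightarrow> valid_word k is \<and> Suc j < k"
  by (auto simp: valid_word_def)

lemma coef_part2:
  assumes "valid_word k is"
  shows "\<rho> permutes {..<k} \<Longrightarrow> a < b \<Longrightarrow> b < k \<Longrightarrow> inv \<rho> b < inv \<rho> a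
     \<Longrightarrow> w b = of_real q * w a \<Longrightarrow> coef q is \<rho> w = 0"
  using assms
proof (induction "is" arbitrary: \<rho> rule: rev_induct)
  case Nil
  then show ?case by auto
next
  case (snoc j "is")
  have v: "valid_word k is" "Suc j < k" using snoc.prems by (auto simp: valid_snoc)
  have p: "(\<rho> \<circ> sigma j) permutes {..<k}"
    by (rule permutes_compose[OF sigma_permutes[OF v(2)] snoc.prems(1)])
  have t1: "coef q is \<rho> w = 0" using snoc.IH[OF snoc.prems(1-5) v(1)] .
  have t2: "coef q is (\<rho> \<circ> sigma j) w * Bc q j (w \<circ> \<rho> \<circ> sigma j) = 0"
  proof (cases "sigma j (inv \<rho> b) < sigma j (inv \<rho> a)")
    case True
    then have "inv (\<rho> \<circ> sigma j) b < inv (\<rho> \<circ> sigma j) a"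
      by (simp only: inv_comp_sigma[OF snoc.prems(1)])
    then have "coef q is (\<rho> \<circ> sigma j) w = 0"
      using snoc.IH[OF p snoc.prems(2,3) _ snoc.prems(5) v(1)] by blast
    then show ?thesis by simp
  next
    case False
    with snoc.prems(4) have "inv \<rho> a = Suc j" "inv \<rho> b = j"
      by (auto simp: sigma_def Transposition.transpose_def split: if_splits)
    then have "\<rho> (Suc j) = a" "\<rho> j = b"
      by (metis permutes_inverses(1)[OF snoc.prems(1)])+
    then have "Bc q j (w \<circ> \<rho> \<circ> sigma j) = 0"
      using snoc.prems(5) by (simp add: Bc_def sigma_def)
    then show ?thesis by simp
  qed
  show ?case by (simp add: coef_snoc t1 t2)
qed

section \<open>Inversions\<close>

definition inv_set :: "nat \<Rightarrow> (nat \<Rightarrow> nat) \<Rightarrow> (nat \<times> nat) set" where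
  "inv_set k p = {(x,y). x < y \<and> y < k \<and> p y < p x}"

definition inv_cnt :: "nat \<Rightarrow> (nat \<Rightarrow> nat) \<Rightarrow> nat" where
  "inv_cnt k p = card (inv_set k p)"

lemma finite_inv_set: "finite (inv_set k p)"
  by (rule finite_subset[of _ "{..<k} \<times> {..<k}"]) (auto simp: inv_set_def)

lemma sigma_pair: "x < y \<Longrightarrow> (x, y) \<noteq> (j, Suc j) \<Longrightarrow> sigma j x < sigma j y"
  by (auto simp: sigma_def Transposition.transpose_def)

lemma sigma_lt_iff: "Suc j < k \<Longrightarrow> sigma j y < k \<longleftrightarrow> y < k"
  by (auto simp: sigma_def Transposition.transpose_def)

lemma sigma_pair_eq: "(sigma j x, sigma j y) = (j, Suc j) \<longleftrightarrow> (x, y) = (Suc j, j)"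
  by (auto simp: sigma_def Transposition.transpose_def)

lemma inv_cnt_sigma:
  assumes "Suc j < k"
  shows "inv_cnt k (p \<circ> sigma j) + (if p (Suc j) < p j then 1 else 0)
       = inv_cnt k p + (if p j < p (Suc j) then 1 else 0)"
proof -
  let ?P0 = "(j, Suc j)"
  let ?g = "\<lambda>(x::nat, y::nat). (sigma j x, sigma j y)"
  have bij: "bij_betw ?g (inv_set k p - {?P0}) (inv_set k (p \<circ> sigma j) - {?P0})"
  proof (rule bij_betw_byWitness[where f'="?g"])
    show "\<forall>a\<in>inv_set k p - {?P0}. ?g (?g a) = a" by auto
    show "\<forall>a\<in>inv_set k (p \<circ> sigma j) - {?P0}. ?g (?g a) = a" by auto
    have fw: "(sigma j x, sigma j y) \<in> inv_set k (p \<circ> sigma j) - {?P0}"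
      if h: "(x, y) \<in> inv_set k p - {?P0}" for x y
    proof -
      have "x < y" "y < k" "p y < p x" "(x, y) \<noteq> ?P0" using h by (auto simp: inv_set_def)
      moreover have "(sigma j x, sigma j y) \<noteq> ?P0" using sigma_pair_eq[of j x y] \<open>x < y\<close> by auto
      ultimately show ?thesis
        using sigma_pair[of x y j] sigma_lt_iff[OF assms, of y] by (auto simp: inv_set_def)
    qed
    have bw: "(sigma j x, sigma j y) \<in> inv_set k p - {?P0}"
      if h: "(x, y) \<in> inv_set k (p \<circ> sigma j) - {?P0}" for x y
    proof -
      have "x < y" "y < k" "p (sigma j y) < p (sigma j x)" "(x, y) \<noteq> ?P0" using h by (auto simp: inv_set_def)
      moreover have "(sigma j x, sigma j y) \<noteq> ?P0" using sigma_pair_eq[of j x y] \<open>x < y\<close> by auto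
      ultimately show ?thesis
        using sigma_pair[of x y j] sigma_lt_iff[OF assms, of y] by (auto simp: inv_set_def)
    qed
    show "?g ` (inv_set k p - {?P0}) \<subseteq> inv_set k (p \<circ> sigma j) - {?P0}"
      using fw by auto
    show "?g ` (inv_set k (p \<circ> sigma j) - {?P0}) \<subseteq> inv_set k p - {?P0}"
      using bw by auto
  qed
  have c: "card (inv_set k p - {?P0}) = card (inv_set k (p \<circ> sigma j) - {?P0})"
    using bij_betw_same_card[OF bij] .
  have m1: "?P0 \<in> inv_set k p \<longleftrightarrow> p (Suc j) < p j" using assms by (auto simp: inv_set_def)
  have m2: "?P0 \<in> inv_set k (p \<circ> sigma j) \<longleftrightarrow> p j < p (Suc j)"
    using assms by (auto simp: inv_set_def sigma_def)
  have cs: "card A = card (A - {?P0}) + (if ?P0 \<in> A then 1 else 0)" if "finite A" for A :: "(nat \<times> nat) set"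
    using that by (simp add: card_Diff_singleton_if) (metis Suc_pred card_gt_0_iff empty_iff)
  show ?thesis
    unfolding inv_cnt_def
    using cs[OF finite_inv_set, of k p] cs[OF finite_inv_set, of k "p \<circ> sigma j"] c m1 m2
    by auto
qed

lemma word_perm_Nil[simp]: "word_perm [] = id"
  by (simp add: word_perm_def)

lemma word_perm_Cons: "word_perm (i # is) = sigma i \<circ> word_perm is"
  by (simp add: word_perm_def)

lemma foldr_sigma_comp: "foldr (\<lambda>i p. sigma i \<circ> p) is p0 = foldr (\<lambda>i p. sigma i \<circ> p) is id \<circ> p0"
  by (induction "is") (auto simp: o_assoc)

lemma word_perm_snoc: "word_perm (is @ [j]) = word_perm is \<circ> sigma j"
  unfolding word_perm_def by (simp add: foldr_sigma_comp[of _ "sigma j"])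

lemma word_perm_permutes: "valid_word k is \<Longrightarrow> word_perm is permutes {..<k}"
  by (induction "is") (auto simp: valid_word_def word_perm_Cons permutes_id
      intro!: permutes_compose sigma_permutes)

lemma inv_cnt_id: "inv_cnt k id = 0" "inv_cnt k (\<lambda>a. a) = 0"
proof -
  have "inv_set k id = {}" "inv_set k (\<lambda>a. a) = {}" by (auto simp: inv_set_def)
  then show "inv_cnt k id = 0" "inv_cnt k (\<lambda>a. a) = 0" by (auto simp: inv_cnt_def)
qed

lemma inv_cnt_le_length: "valid_word k is \<Longrightarrow> inv_cnt k (word_perm is) \<le> length is"
proof (induction "is" rule: rev_induct)
  case Nil then show ?case by (simp add: inv_cnt_id)
next
  case (snoc j "is")
  then have "valid_word k is" "Suc j < k" by (auto simp: valid_snoc)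
  then show ?case using snoc.IH inv_cnt_sigma[of j k "word_perm is"]
    by (auto simp: word_perm_snoc comp_def split: if_splits)
qed

lemma strict_mono_gap:
  assumes "\<forall>j. Suc j < k \<longrightarrow> p j < p (Suc j)"
  shows "x \<le> y \<Longrightarrow> y < k \<Longrightarrow> p x + (y - x) \<le> p y"
proof (induction y)
  case 0 then show ?case by simp
next
  case (Suc y)
  show ?case
  proof (cases "x = Suc y")
    case True then show ?thesis by simp
  next
    case False
    then have "x \<le> y" using Suc.prems by simp
    then have "p x + (y - x) \<le> p y" using Suc by simp
    moreover have "p y < p (Suc y)" using assms Suc.prems by simp
    ultimately show ?thesis using \<open>x \<le> y\<close> by simp
  qed
qed

lemma descent_exists:
  assumes p: "p permutes {..<k}" and ne: "p \<noteq> id"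
  shows "\<exists>j. Suc j < k \<and> p (Suc j) < p j"
proof (rule ccontr)
  assume "\<not> ?thesis"
  then have le: "\<forall>j. Suc j < k \<longrightarrow> p j \<le> p (Suc j)" by (meson not_less)
  have inj: "inj p" using permutes_inj[OF p] .
  have mono: "\<forall>j. Suc j < k \<longrightarrow> p j < p (Suc j)"
  proof (intro allI impI)
    fix j assume "Suc j < k"
    then have "p j \<le> p (Suc j)" using le by blast
    moreover have "p j \<noteq> p (Suc j)" by (simp add: inj_eq[OF inj])
    ultimately show "p j < p (Suc j)" by simp
  qed
  have "p x = x" for x
  proof (cases "x < k")
    case True
    have a: "p 0 + (x - 0) \<le> p x" by (rule strict_mono_gap[OF mono]) (use True in auto)
    have b: "p x + (k - 1 - x) \<le> p (k - 1)" by (rule strict_mono_gap[OF mono]) (use True in auto)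
    have "p (k - 1) < k" using True permutes_in_image[OF p, of "k - 1"] by auto
    then have c: "p x + (k - 1 - x) < k" using b by linarith
    have d: "x \<le> p x" using a by simp
    have "p x \<le> x" using c True by simp
    then show ?thesis using d by simp
  next
    case False then show ?thesis using permutes_not_in[OF p] by auto
  qed
  then have "p = id" by auto
  then show False using ne by simp
qed

lemma word_exists:
  "p permutes {..<k} \<Longrightarrow> \<exists>is. valid_word k is \<and> word_perm is = p \<and> length is = inv_cnt k p"
proof (induction "inv_cnt k p" arbitrary: p rule: less_induct)
  case less
  show ?case
  proof (cases "p = id")
    case True then show ?thesis by (intro exI[of _ "[]"]) (simp add: valid_word_def inv_cnt_id)
  next
    case False
    obtain j where j: "Suc j < k" "p (Suc j) < p j" using descent_exists[OF less.prems False] by blast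
    let ?p' = "p \<circ> sigma j"
    have pp: "?p' permutes {..<k}" by (rule permutes_compose[OF sigma_permutes[OF j(1)] less.prems])
    have c: "inv_cnt k ?p' + 1 = inv_cnt k p" using inv_cnt_sigma[OF j(1), of p] j(2) by auto
    obtain js where js: "valid_word k js" "word_perm js = ?p'" "length js = inv_cnt k ?p'"
      using less.hyps[of ?p'] c pp by auto
    show ?thesis
    proof (intro exI[of _ "js @ [j]"] conjI)
      show "valid_word k (js @ [j])" using js(1) j(1) by (simp add: valid_snoc)
      show "word_perm (js @ [j]) = p" using js(2) by (simp add: word_perm_snoc o_assoc[symmetric])
      show "length (js @ [j]) = inv_cnt k p" using js(3) c by simp
    qed
  qed
qed

lemma reduced_inv_cnt:
  assumes "reduced_word k is \<pi>"
  shows "valid_word k is" "word_perm is = \<pi>" "inv_cnt k \<pi> = length is"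
proof -
  show v: "valid_word k is" and w: "word_perm is = \<pi>" using assms by (auto simp: reduced_word_def)
  have "\<pi> permutes {..<k}" using word_perm_permutes[OF v] w by simp
  then obtain js where "valid_word k js" "word_perm js = \<pi>" "length js = inv_cnt k \<pi>"
    using word_exists by blast
  then have "length is \<le> inv_cnt k \<pi>" using assms by (auto simp: reduced_word_def)
  moreover have "inv_cnt k \<pi> \<le> length is" using inv_cnt_le_length[OF v] w by simp
  ultimately show "inv_cnt k \<pi> = length is" by simp
qed

lemma tight_snoc:
  assumes v: "valid_word k (is @ [j])" and t: "inv_cnt k (word_perm (is @ [j])) = length (is @ [j])"
  shows "valid_word k is" "Suc j < k" "inv_cnt k (word_perm is) = length is"
    "word_perm is j < word_perm is (Suc j)"
proof -
  show v1: "valid_word k is" and j: "Suc j < k" using v by (auto simp: valid_snoc)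
  let ?p = "word_perm is"
  have le: "inv_cnt k ?p \<le> length is" by (rule inv_cnt_le_length[OF v1])
  have e: "inv_cnt k (?p \<circ> sigma j) + (if ?p (Suc j) < ?p j then 1 else 0)
       = inv_cnt k ?p + (if ?p j < ?p (Suc j) then 1 else 0)" by (rule inv_cnt_sigma[OF j])
  have t': "inv_cnt k (?p \<circ> sigma j) = length is + 1" using t by (simp add: word_perm_snoc)
  show "word_perm is j < word_perm is (Suc j)" using e t' le by (auto split: if_splits)
  then show "inv_cnt k (word_perm is) = length is" using e t' le by auto
qed


lemma Ac_zero:
  assumes "v (Suc j) = 0" "v j \<noteq> 0"
  shows "Ac q j v = 0"
  using assms by (simp add: Ac_def Bc_def)

lemma coef_part3a:
  assumes "valid_word k is" "inv_cnt k (word_perm is) = length is"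
  shows "\<rho> permutes {..<k} \<Longrightarrow> a < k \<Longrightarrow> word_perm is (inv \<rho> a) < a
     \<Longrightarrow> inj_on w {..<k} \<Longrightarrow> w a = 0 \<Longrightarrow> coef q is \<rho> w = 0"
  using assms
proof (induction "is" arbitrary: \<rho> rule: rev_induct)
  case Nil
  then show ?case by (auto simp: inv_id)
next
  case (snoc j "is")
  note t = tight_snoc[OF snoc.prems(6,7)]
  let ?p = "word_perm is"
  have pp: "(\<rho> \<circ> sigma j) permutes {..<k}"
    by (rule permutes_compose[OF sigma_permutes[OF t(2)] snoc.prems(1)])
  let ?y = "inv \<rho> a"
  have hy: "?p (sigma j ?y) < a" using snoc.prems(3) by (simp add: word_perm_snoc)
  have t2: "coef q is (\<rho> \<circ> sigma j) w = 0"
  proof -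
    have "word_perm is (inv (\<rho> \<circ> sigma j) a) < a"
      using hy by (simp only: inv_comp_sigma[OF snoc.prems(1)])
    then show ?thesis using snoc.IH[OF pp snoc.prems(2) _ snoc.prems(4,5) t(1,3)] by blast
  qed
  have t1: "coef q is \<rho> w * Ac q j (w \<circ> \<rho>) = 0"
  proof (cases "?y = Suc j")
    case True
    then have r: "\<rho> (Suc j) = a" by (metis permutes_inverses(1)[OF snoc.prems(1)])
    have "\<rho> j \<noteq> a" using r permutes_inj[OF snoc.prems(1)] by (metis inj_eq n_not_Suc_n)
    moreover have "\<rho> j < k" using t(2) permutes_in_image[OF snoc.prems(1), of j] by simp
    ultimately have "w (\<rho> j) \<noteq> 0" using snoc.prems(2,4,5) by (metis inj_onD lessThan_iff)
    then have "Ac q j (w \<circ> \<rho>) = 0" using r snoc.prems(5) by (intro Ac_zero) auto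
    then show ?thesis by simp
  next
    case False
    have "?p ?y < a"
    proof (cases "?y = j")
      case True
      then show ?thesis using hy t(4) by (simp add: sigma_def)
    next
      case False2: False
      then have "sigma j ?y = ?y" using False by (simp add: sigma_def)
      then show ?thesis using hy by simp
    qed
    then have "coef q is \<rho> w = 0" using snoc.IH[OF snoc.prems(1,2) _ snoc.prems(4,5) t(1,3)] by blast
    then show ?thesis by simp
  qed
  show ?case by (simp add: coef_snoc t1 t2)
qed


lemma const_conv: "\<exists>L. ((\<lambda>z. c) \<longlongrightarrow> L) F"
  by (rule exI, rule tendsto_const)

lemma ratio_lim: "((\<lambda>z::complex. (z - x) / (z - y)) \<longlongrightarrow> 1) at_infinity"
proof -
  have lim1: "filterlim (\<lambda>z::complex. z + (- y)) at_infinity at_infinity"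
    by (rule tendsto_add_filterlim_at_infinity'[OF filterlim_ident tendsto_const])
  have "((\<lambda>z::complex. (y - x) / (z + (- y))) \<longlongrightarrow> 0) at_infinity"
    by (rule tendsto_divide_0[OF tendsto_const lim1])
  then have "((\<lambda>z::complex. 1 + (y - x) / (z + (- y))) \<longlongrightarrow> 1 + 0) at_infinity"
    by (intro tendsto_add tendsto_const)
  then have l: "((\<lambda>z::complex. 1 + (y - x) / (z + (- y))) \<longlongrightarrow> 1) at_infinity" by simp
  have ev: "\<forall>\<^sub>F z in at_infinity. 1 + (y - x) / (z + (- y)) = (z - x) / (z - y)"
    unfolding eventually_at_infinity
  proof (intro exI[of _ "norm y + 1"] allI impI)
    fix z :: complex assume "norm y + 1 \<le> norm z"
    then have "z \<noteq> y" by auto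
    then show "1 + (y - x) / (z + - y) = (z - x) / (z - y)"
      by (simp add: field_simps)
  qed
  show ?thesis by (rule Lim_transform_eventually[OF l ev])
qed

lemma ratio_lim2:
  assumes "q \<noteq> 0"
  shows "((\<lambda>z::complex. (c - of_real q * z) / (c - z)) \<longlongrightarrow> of_real q) at_infinity"
proof -
  have e: "(c - of_real q * z) / (c - z) = of_real q * ((z - c / of_real q) / (z - c))" for z :: complex
  proof (cases "z = c")
    case True then show ?thesis by simp
  next
    case False
    then have "c - z \<noteq> 0" "z - c \<noteq> 0" by auto
    then show ?thesis using assms by (simp add: field_simps)
  qed
  have "((\<lambda>z::complex. of_real q * ((z - c / of_real q) / (z - c))) \<longlongrightarrow> of_real q * 1) at_infinity"
    by (intro tendsto_mult tendsto_const ratio_lim)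
  then show ?thesis by (simp add: e)
qed

lemma Bc_conv:
  assumes "q \<noteq> 0"
  shows "\<exists>L. ((\<lambda>z. Bc q j (v(a := z) \<circ> g)) \<longlongrightarrow> L) at_infinity"
proof (cases "g j = a")
  case True
  show ?thesis
  proof (cases "g (Suc j) = a")
    case True2: True
    then show ?thesis using True by (simp add: Bc_def const_conv)
  next
    case False
    then show ?thesis using True ratio_lim2[OF assms, of "v (g (Suc j))"]
      by (auto simp: Bc_def)
  qed
next
  case False
  show ?thesis
  proof (cases "g (Suc j) = a")
    case True
    then show ?thesis using False ratio_lim[of "of_real q * v (g j)" "v (g j)"]
      by (auto simp: Bc_def)
  next
    case False2: False
    then show ?thesis using False by (simp add: Bc_def const_conv)
  qed
qed

lemma Ac_conv:
  assumes "q \<noteq> 0"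
  shows "\<exists>L. ((\<lambda>z. Ac q j (v(a := z) \<circ> g)) \<longlongrightarrow> L) at_infinity"
proof -
  obtain L where "((\<lambda>z. Bc q j (v(a := z) \<circ> g)) \<longlongrightarrow> L) at_infinity"
    using Bc_conv[OF assms, of j v a g] by blast
  then have "((\<lambda>z. of_real q - Bc q j (v(a := z) \<circ> g)) \<longlongrightarrow> of_real q - L) at_infinity"
    by (intro tendsto_diff tendsto_const)
  then show ?thesis unfolding Ac_def by blast
qed

lemma Ac_lim0:
  assumes "q \<noteq> 0" "g j = a" "g (Suc j) \<noteq> a"
  shows "((\<lambda>z. Ac q j (v(a := z) \<circ> g)) \<longlongrightarrow> 0) at_infinity"
proof -
  have "((\<lambda>z. of_real q - (v (g (Suc j)) - of_real q * z) / (v (g (Suc j)) - z)) \<longlongrightarrow> of_real q - of_real q) at_infinity"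
    by (intro tendsto_diff tendsto_const ratio_lim2 assms)
  then show ?thesis using assms by (simp add: Ac_def Bc_def)
qed

lemma coef_snoc_fun:
  "(\<lambda>z. coef q (is @ [j]) \<rho> (w(a := z))) =
   (\<lambda>z. coef q is \<rho> (w(a := z)) * Ac q j (w(a := z) \<circ> \<rho>)
      + coef q is (\<rho> \<circ> sigma j) (w(a := z)) * Bc q j (w(a := z) \<circ> (\<rho> \<circ> sigma j)))"
  by (rule ext) (simp only: coef_snoc o_assoc)

lemma coef_conv:
  assumes "q \<noteq> 0"
  shows "\<exists>L. ((\<lambda>z. coef q is \<rho> (w(a := z))) \<longlongrightarrow> L) at_infinity"
proof (induction "is" arbitrary: \<rho> rule: rev_induct)
  case Nil
  then show ?case by (simp add: const_conv)
next
  case (snoc j "is")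
  obtain L1 where 1: "((\<lambda>z. coef q is \<rho> (w(a := z))) \<longlongrightarrow> L1) at_infinity" using snoc.IH by blast
  obtain L2 where 2: "((\<lambda>z. coef q is (\<rho> \<circ> sigma j) (w(a := z))) \<longlongrightarrow> L2) at_infinity" using snoc.IH by blast
  obtain L3 where 3: "((\<lambda>z. Ac q j (w(a := z) \<circ> \<rho>)) \<longlongrightarrow> L3) at_infinity" using Ac_conv[OF assms, of j w a \<rho>] by blast
  obtain L4 where 4: "((\<lambda>z. Bc q j (w(a := z) \<circ> (\<rho> \<circ> sigma j))) \<longlongrightarrow> L4) at_infinity" using Bc_conv[OF assms, of j w a "\<rho> \<circ> sigma j"] by blast
  show ?case unfolding coef_snoc_fun
    by (rule exI[of _ "L1 * L3 + L2 * L4"]) (intro tendsto_add tendsto_mult 1 2 3 4)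
qed

lemma coef_part3b:
  assumes "q \<noteq> 0" "valid_word k is" "inv_cnt k (word_perm is) = length is"
  shows "\<rho> permutes {..<k} \<Longrightarrow> a < k \<Longrightarrow> a < word_perm is (inv \<rho> a)
     \<Longrightarrow> ((\<lambda>z. coef q is \<rho> (w(a := z))) \<longlongrightarrow> 0) at_infinity"
  using assms(2,3)
proof (induction "is" arbitrary: \<rho> rule: rev_induct)
  case Nil
  then show ?case by (auto simp: inv_id)
next
  case (snoc j "is")
  note t = tight_snoc[OF snoc.prems(4,5)]
  let ?p = "word_perm is"
  have pp: "(\<rho> \<circ> sigma j) permutes {..<k}"
    by (rule permutes_compose[OF sigma_permutes[OF t(2)] snoc.prems(1)])
  let ?y = "inv \<rho> a"
  have hy: "a < ?p (sigma j ?y)" using snoc.prems(3) by (simp add: word_perm_snoc)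
  obtain L4 where 4: "((\<lambda>z. Bc q j (w(a := z) \<circ> (\<rho> \<circ> sigma j))) \<longlongrightarrow> L4) at_infinity"
    using Bc_conv[OF assms(1), of j w a "\<rho> \<circ> sigma j"] by blast
  have t2: "((\<lambda>z. coef q is (\<rho> \<circ> sigma j) (w(a := z)) * Bc q j (w(a := z) \<circ> (\<rho> \<circ> sigma j))) \<longlongrightarrow> 0 * L4) at_infinity"
  proof (intro tendsto_mult 4)
    have "a < word_perm is (inv (\<rho> \<circ> sigma j) a)"
      using hy by (simp only: inv_comp_sigma[OF snoc.prems(1)])
    then show "((\<lambda>z. coef q is (\<rho> \<circ> sigma j) (w(a := z))) \<longlongrightarrow> 0) at_infinity"
      using snoc.IH[OF pp snoc.prems(2) _ t(1,3)] by blast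
  qed
  have t1: "((\<lambda>z. coef q is \<rho> (w(a := z)) * Ac q j (w(a := z) \<circ> \<rho>)) \<longlongrightarrow> 0) at_infinity"
  proof (cases "?y = j")
    case True
    then have r: "\<rho> j = a" by (metis permutes_inverses(1)[OF snoc.prems(1)])
    have "\<rho> (Suc j) \<noteq> a" using r permutes_inj[OF snoc.prems(1)] by (metis inj_eq n_not_Suc_n)
    then have "((\<lambda>z. Ac q j (w(a := z) \<circ> \<rho>)) \<longlongrightarrow> 0) at_infinity"
      using r by (intro Ac_lim0 assms(1))
    moreover obtain L1 where "((\<lambda>z. coef q is \<rho> (w(a := z))) \<longlongrightarrow> L1) at_infinity"
      using coef_conv[OF assms(1)] by blast
    ultimately have "((\<lambda>z. coef q is \<rho> (w(a := z)) * Ac q j (w(a := z) \<circ> \<rho>)) \<longlongrightarrow> L1 * 0) at_infinity"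
      by (intro tendsto_mult)
    then show ?thesis by simp
  next
    case False
    have "a < ?p ?y"
    proof (cases "?y = Suc j")
      case True
      then show ?thesis using hy t(4) by (simp add: sigma_def)
    next
      case False2: False
      then have "sigma j ?y = ?y" using False by (simp add: sigma_def)
      then show ?thesis using hy by simp
    qed
    then have l: "((\<lambda>z. coef q is \<rho> (w(a := z))) \<longlongrightarrow> 0) at_infinity"
      using snoc.IH[OF snoc.prems(1,2) _ t(1,3)] by blast
    obtain L3 where 3: "((\<lambda>z. Ac q j (w(a := z) \<circ> \<rho>)) \<longlongrightarrow> L3) at_infinity"
      using Ac_conv[OF assms(1), of j w a \<rho>] by blast
    have "((\<lambda>z. coef q is \<rho> (w(a := z)) * Ac q j (w(a := z) \<circ> \<rho>)) \<longlongrightarrow> 0 * L3) at_infinity"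
      by (intro tendsto_mult l 3)
    then show ?thesis by simp
  qed
  have "((\<lambda>z. coef q is \<rho> (w(a := z)) * Ac q j (w(a := z) \<circ> \<rho>)
      + coef q is (\<rho> \<circ> sigma j) (w(a := z)) * Bc q j (w(a := z) \<circ> (\<rho> \<circ> sigma j))) \<longlongrightarrow> 0 + 0 * L4) at_infinity"
    by (intro tendsto_add t1 t2)
  then show ?case unfolding coef_snoc_fun by simp
qed


inductive pf :: "nat \<Rightarrow> ((nat \<Rightarrow> complex) \<Rightarrow> complex) \<Rightarrow> bool" for k where
  pf_const: "pf k (\<lambda>w. c)"
| pf_var: "i < k \<Longrightarrow> pf k (\<lambda>w. w i)"
| pf_add: "pf k P \<Longrightarrow> pf k Q \<Longrightarrow> pf k (\<lambda>w. P w + Q w)"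
| pf_mult: "pf k P \<Longrightarrow> pf k Q \<Longrightarrow> pf k (\<lambda>w. P w * Q w)"

lemma pf_diff: "pf k P \<Longrightarrow> pf k Q \<Longrightarrow> pf k (\<lambda>w. P w - Q w)"
proof -
  assume "pf k P" "pf k Q"
  then have "pf k (\<lambda>w. P w + (\<lambda>w. - 1) w * Q w)" by (intro pf_add pf_mult pf_const)
  then show ?thesis by simp
qed

lemma pf_prod: "finite A \<Longrightarrow> (\<And>x. x \<in> A \<Longrightarrow> pf k (F x)) \<Longrightarrow> pf k (\<lambda>w. \<Prod>x\<in>A. F x w)"
proof (induction A rule: finite_induct)
  case empty then show ?case by (simp add: pf_const)
next
  case (insert x A)
  then have "pf k (\<lambda>w. F x w * (\<Prod>x\<in>A. F x w))" by (intro pf_mult) auto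
  then show ?case using insert by simp
qed

lemma pf_comp: "pf k P \<Longrightarrow> (\<And>i. i < k \<Longrightarrow> g i < k) \<Longrightarrow> pf k (\<lambda>w. P (w \<circ> g))"
  by (induction rule: pf.induct) (auto intro: pf.intros)

lemma pf_factor:
  assumes "pf k P" "m < k" "n < k"
  shows "\<exists>Q. pf k Q \<and> (\<forall>w. P w - P (w(m := w n)) = (w m - w n) * Q w)"
  using assms
proof (induction rule: pf.induct)
  case (pf_const c)
  then show ?case by (intro exI[of _ "\<lambda>w. 0"]) (auto intro: pf.intros)
next
  case (pf_var i)
  show ?case
  proof (cases "i = m")
    case True then show ?thesis by (intro exI[of _ "\<lambda>w. 1"]) (auto intro: pf.intros)
  next
    case False then show ?thesis by (intro exI[of _ "\<lambda>w. 0"]) (auto intro: pf.intros)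
  qed
next
  case (pf_add P Q)
  then obtain Q1 Q2 where h: "pf k Q1" "\<forall>w. P w - P (w(m := w n)) = (w m - w n) * Q1 w"
    "pf k Q2" "\<forall>w. Q w - Q (w(m := w n)) = (w m - w n) * Q2 w" by blast
  have e: "P w + Q w - (P (w(m := w n)) + Q (w(m := w n))) = (w m - w n) * (Q1 w + Q2 w)" for w
  proof -
    have "P w + Q w - (P (w(m := w n)) + Q (w(m := w n)))
        = (P w - P (w(m := w n))) + (Q w - Q (w(m := w n)))" by (simp add: algebra_simps)
    also have "\<dots> = (w m - w n) * Q1 w + (w m - w n) * Q2 w" by (simp only: h(2,4)[rule_format])
    finally show ?thesis by (simp add: distrib_left)
  qed
  show ?case
    by (intro exI[of _ "\<lambda>w. Q1 w + Q2 w"] conjI allI e) (intro pf.intros h(1,3))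
next
  case (pf_mult P Q)
  then obtain Q1 Q2 where h: "pf k Q1" "\<forall>w. P w - P (w(m := w n)) = (w m - w n) * Q1 w"
    "pf k Q2" "\<forall>w. Q w - Q (w(m := w n)) = (w m - w n) * Q2 w" by blast
  have g: "w(m := w n) = w \<circ> (id(m := n))" for w :: "nat \<Rightarrow> complex" by (rule ext) simp
  have pP: "pf k (\<lambda>w. P (w(m := w n)))"
    unfolding g by (rule pf_comp[OF pf_mult(1)]) (use pf_mult in auto)
  have e: "P w * Q w - P (w(m := w n)) * Q (w(m := w n))
     = (w m - w n) * (Q1 w * Q w + P (w(m := w n)) * Q2 w)" for w
  proof -
    have "P w * Q w - P (w(m := w n)) * Q (w(m := w n))
        = (P w - P (w(m := w n))) * Q w + P (w(m := w n)) * (Q w - Q (w(m := w n)))"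
      by (simp add: algebra_simps)
    also have "\<dots> = ((w m - w n) * Q1 w) * Q w + P (w(m := w n)) * ((w m - w n) * Q2 w)"
      by (simp only: h(2,4)[rule_format])
    also have "\<dots> = (w m - w n) * (Q1 w * Q w + P (w(m := w n)) * Q2 w)"
      by (simp add: algebra_simps)
    finally show ?thesis .
  qed
  show ?case
    by (intro exI[of _ "\<lambda>w. Q1 w * Q w + P (w(m := w n)) * Q2 w"] conjI allI e)
       (intro pf.intros h(1,3) pP pf_mult(1,2))
qed

lemma pf_cont:
  "pf k P \<Longrightarrow> (\<And>i. continuous_on UNIV (\<lambda>t::complex. h t i)) \<Longrightarrow> continuous_on UNIV (\<lambda>t. P (h t))"
  by (induction rule: pf.induct) (auto intro!: continuous_intros)

lemma pf_density:
  assumes "pf k P" and z: "\<And>t. t \<noteq> 0 \<Longrightarrow> P (v(m := v m + t)) = 0"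
  shows "P v = 0"
proof -
  let ?h = "\<lambda>t::complex. v(m := v m + t)"
  have "continuous_on UNIV (\<lambda>t. P (?h t))"
    apply (rule pf_cont[OF assms(1)])
    subgoal for i by (cases "i = m") (auto intro!: continuous_intros)
    done
  then have "isCont (\<lambda>t. P (?h t)) 0" by (simp add: continuous_on_eq_continuous_at)
  then have l1: "((\<lambda>t. P (?h t)) \<longlongrightarrow> P (?h 0)) (at 0)" by (simp add: isCont_def)
  have l2: "((\<lambda>t. P (?h t)) \<longlongrightarrow> 0) (at 0)"
  proof (rule Lim_transform_eventually[OF tendsto_const])
    show "\<forall>\<^sub>F t in at 0. 0 = P (?h t)" unfolding eventually_at_filter using z by auto
  qed
  have "P (?h 0) = 0" using tendsto_unique[OF at_neq_bot l1 l2] .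
  then show ?thesis by simp
qed


definition Delta :: "nat \<Rightarrow> (nat \<Rightarrow> complex) \<Rightarrow> complex" where
  "Delta k w = (\<Prod>j<k. \<Prod>i<j. (w j - w i))"

lemma pf_Delta: "pf k (Delta k)"
proof -
  have "pf k (\<lambda>w. \<Prod>j<k. \<Prod>i<j. (w j - w i))"
    by (intro pf_prod pf_diff pf_var) auto
  then show ?thesis unfolding Delta_def[abs_def] .
qed

lemma Delta_nz: "inj_on w {..<k} \<Longrightarrow> Delta k w \<noteq> 0"
  unfolding Delta_def by (auto simp: prod_zero_iff dest: inj_onD)

lemma Delta_zero:
  assumes "c < k" "d < k" "c \<noteq> d" "w c = w d"
  shows "Delta k w = 0"
proof -
  have "\<exists>j<k. \<exists>i<j. w j - w i = 0"
  proof (cases "c < d")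
    case True then show ?thesis using assms by (intro exI[of _ d] conjI exI[of _ c]) auto
  next
    case False then show ?thesis using assms by (intro exI[of _ c] conjI exI[of _ d]) auto
  qed
  then show ?thesis unfolding Delta_def by (auto simp: prod_zero_iff)
qed

lemma Delta_sigma:
  assumes s: "Suc s < k"
  shows "Delta k (w \<circ> sigma s) = - Delta k w"
proof -
  let ?PS = "SIGMA j:{..<k}. {..<j}"
  let ?P0 = "(Suc s, s)"
  have fin: "finite ?PS" by auto
  have P0: "?P0 \<in> ?PS" using s by auto
  have D: "Delta k v = (\<Prod>(j, i)\<in>?PS. v j - v i)" for v :: "nat \<Rightarrow> complex"
    unfolding Delta_def by (rule prod.Sigma) auto
  have R: "(\<Prod>(j, i)\<in>?PS - {?P0}. (w \<circ> sigma s) j - (w \<circ> sigma s) i)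
         = (\<Prod>(j, i)\<in>?PS - {?P0}. w j - w i)"
  proof (rule prod.reindex_bij_witness[where i="\<lambda>(j, i). (sigma s j, sigma s i)"
                                        and j="\<lambda>(j, i). (sigma s j, sigma s i)"])
    have mem: "(sigma s j, sigma s i) \<in> ?PS - {?P0}" if "(j, i) \<in> ?PS - {?P0}" for j i
    proof -
      have h: "i < j" "j < k" "(i, j) \<noteq> (s, Suc s)" using that by auto
      have "sigma s i < sigma s j" by (rule sigma_pair[OF h(1,3)])
      moreover have "sigma s j < k" using sigma_lt_iff[OF s] h by simp
      moreover have "(sigma s j, sigma s i) \<noteq> ?P0"
        using h(1) by (auto simp: sigma_def Transposition.transpose_def split: if_splits)
      ultimately show ?thesis by auto
    qed
    fix a assume "a \<in> ?PS - {?P0}"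
    then show "(case case a of (j, i) \<Rightarrow> (sigma s j, sigma s i) of (j, i) \<Rightarrow> (sigma s j, sigma s i)) = a"
      "(case a of (j, i) \<Rightarrow> (sigma s j, sigma s i)) \<in> ?PS - {?P0}"
      using mem by (auto split: prod.splits)
  next
    have mem: "(sigma s j, sigma s i) \<in> ?PS - {?P0}" if "(j, i) \<in> ?PS - {?P0}" for j i
    proof -
      have h: "i < j" "j < k" "(i, j) \<noteq> (s, Suc s)" using that by auto
      have "sigma s i < sigma s j" by (rule sigma_pair[OF h(1,3)])
      moreover have "sigma s j < k" using sigma_lt_iff[OF s] h by simp
      moreover have "(sigma s j, sigma s i) \<noteq> ?P0"
        using h(1) by (auto simp: sigma_def Transposition.transpose_def split: if_splits)
      ultimately show ?thesis by auto
    qed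
    fix b assume "b \<in> ?PS - {?P0}"
    then show "(case case b of (j, i) \<Rightarrow> (sigma s j, sigma s i) of (j, i) \<Rightarrow> (sigma s j, sigma s i)) = b"
      "(case b of (j, i) \<Rightarrow> (sigma s j, sigma s i)) \<in> ?PS - {?P0}"
      using mem by (auto split: prod.splits)
  next
    fix a assume "a \<in> ?PS - {?P0}"
    show "(case case a of (j, i) \<Rightarrow> (sigma s j, sigma s i) of (j, i) \<Rightarrow> w j - w i) =
          (case a of (j, i) \<Rightarrow> (w \<circ> sigma s) j - (w \<circ> sigma s) i)"
      by (auto split: prod.splits)
  qed
  have "Delta k (w \<circ> sigma s) = ((w \<circ> sigma s) (Suc s) - (w \<circ> sigma s) s) *
      (\<Prod>(j, i)\<in>?PS - {?P0}. (w \<circ> sigma s) j - (w \<circ> sigma s) i)"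
    unfolding D[of "w \<circ> sigma s"] by (subst prod.remove[OF fin P0]) simp
  also have "\<dots> = - ((w (Suc s) - w s) * (\<Prod>(j, i)\<in>?PS - {?P0}. w j - w i))"
    unfolding R by (simp add: sigma_def algebra_simps)
  also have "\<dots> = - Delta k w"
    unfolding D[of w] by (subst prod.remove[OF fin P0]) simp
  finally show ?thesis .
qed

definition mono_sum :: "nat \<Rightarrow> ((nat \<Rightarrow> complex) \<Rightarrow> complex) \<Rightarrow> bool" where
  "mono_sum k P \<longleftrightarrow> (\<exists>E c. finite E \<and> (\<forall>w. P w = (\<Sum>e\<in>E. c e * (\<Prod>i<k. w i ^ e i))))"

lemma pf_mono_sum: "pf k P \<Longrightarrow> mono_sum k P"
proof (induction rule: pf.induct)
  case (pf_const c)
  show ?case unfolding mono_sum_def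
    by (intro exI[of _ "{\<lambda>_. 0}"] exI[of _ "\<lambda>_. c"]) simp
next
  case (pf_var i)
  have "(\<Prod>l<k. w l ^ ((\<lambda>_. 0)(i := 1)) l) = w i" for w :: "nat \<Rightarrow> complex"
  proof -
    have "(\<Prod>l<k. w l ^ ((\<lambda>_. 0)(i := 1)) l) = (\<Prod>l<k. if l = i then w l else 1)"
      by (rule prod.cong) auto
    also have "\<dots> = w i" using pf_var by (simp add: prod.delta)
    finally show ?thesis .
  qed
  then show ?case unfolding mono_sum_def
    by (intro exI[of _ "{(\<lambda>_. 0)(i := 1)}"] exI[of _ "\<lambda>_. 1"]) simp
next
  case (pf_add P Q)
  then obtain E1 c1 E2 c2 where h: "finite E1" "\<forall>w. P w = (\<Sum>e\<in>E1. c1 e * (\<Prod>i<k. w i ^ e i))"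
    "finite E2" "\<forall>w. Q w = (\<Sum>e\<in>E2. c2 e * (\<Prod>i<k. w i ^ e i))"
    unfolding mono_sum_def by blast
  let ?c = "\<lambda>e. (if e \<in> E1 then c1 e else 0) + (if e \<in> E2 then c2 e else 0)"
  have "P w + Q w = (\<Sum>e\<in>E1 \<union> E2. ?c e * (\<Prod>i<k. w i ^ e i))" for w
  proof -
    have fin: "finite (E1 \<union> E2)" using h by simp
    have a: "(\<Sum>e\<in>E1 \<union> E2. (if e \<in> E1 then c1 e * (\<Prod>i<k. w i ^ e i) else 0)) = (\<Sum>e\<in>E1. c1 e * (\<Prod>i<k. w i ^ e i))"
      using sum.inter_restrict[OF fin, of "\<lambda>e. c1 e * (\<Prod>i<k. w i ^ e i)" E1]
      by (simp add: Int_absorb1)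
    have b: "(\<Sum>e\<in>E1 \<union> E2. (if e \<in> E2 then c2 e * (\<Prod>i<k. w i ^ e i) else 0)) = (\<Sum>e\<in>E2. c2 e * (\<Prod>i<k. w i ^ e i))"
      using sum.inter_restrict[OF fin, of "\<lambda>e. c2 e * (\<Prod>i<k. w i ^ e i)" E2]
      by (simp add: Int_absorb1)
    have "(\<Sum>e\<in>E1 \<union> E2. ?c e * (\<Prod>i<k. w i ^ e i)) =
      (\<Sum>e\<in>E1 \<union> E2. (if e \<in> E1 then c1 e * (\<Prod>i<k. w i ^ e i) else 0)) +
      (\<Sum>e\<in>E1 \<union> E2. (if e \<in> E2 then c2 e * (\<Prod>i<k. w i ^ e i) else 0))"
      unfolding sum.distrib[symmetric] by (rule sum.cong) (auto simp: algebra_simps)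
    then show ?thesis using a b h by simp
  qed
  then show ?case unfolding mono_sum_def using h
    by (intro exI[of _ "E1 \<union> E2"] exI[of _ ?c]) simp
next
  case (pf_mult P Q)
  then obtain E1 c1 E2 c2 where h: "finite E1" "\<forall>w. P w = (\<Sum>e\<in>E1. c1 e * (\<Prod>i<k. w i ^ e i))"
    "finite E2" "\<forall>w. Q w = (\<Sum>e\<in>E2. c2 e * (\<Prod>i<k. w i ^ e i))"
    unfolding mono_sum_def by blast
  define S where "S = E1 \<times> E2"
  define g where "g = (\<lambda>p::(nat \<Rightarrow> nat) \<times> (nat \<Rightarrow> nat). \<lambda>l. fst p l + snd p l)"
  define c where "c = (\<lambda>e. \<Sum>p\<in>{p. p \<in> S \<and> g p = e}. c1 (fst p) * c2 (snd p))"
  have finS: "finite S" using h by (simp add: S_def)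
  have "P w * Q w = (\<Sum>e\<in>g ` S. c e * (\<Prod>i<k. w i ^ e i))" for w
  proof -
    let ?m = "\<lambda>e. \<Prod>i<k. w i ^ e i"
    have "P w * Q w = (\<Sum>e1\<in>E1. \<Sum>e2\<in>E2. (c1 e1 * ?m e1) * (c2 e2 * ?m e2))"
      using h by (simp add: sum_product)
    also have "\<dots> = (\<Sum>p\<in>S. (c1 (fst p) * c2 (snd p)) * ?m (g p))"
      unfolding S_def sum.cartesian_product
      by (rule sum.cong) (auto simp: g_def power_add prod.distrib)
    also have "\<dots> = (\<Sum>e\<in>g ` S. \<Sum>p\<in>{p. p \<in> S \<and> g p = e}. (c1 (fst p) * c2 (snd p)) * ?m (g p))"
      by (rule sum.image_gen[OF finS])
    also have "\<dots> = (\<Sum>e\<in>g ` S. c e * ?m e)"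
      unfolding c_def sum_distrib_right by (rule sum.cong) auto
    finally show ?thesis .
  qed
  then show ?case unfolding mono_sum_def using finS
    by (intro exI[of _ "g ` S"] exI[of _ c]) simp
qed


lemma comp_transpose:
  "inj f \<Longrightarrow> f \<circ> Transposition.transpose c d = Transposition.transpose (f c) (f d) \<circ> f"
  by (rule ext) (auto simp: Transposition.transpose_def inj_eq)

lemma inj_sigma: "inj (sigma i)"
  by (simp add: sigma_def inj_transpose)

lemma coef_poly:
  assumes "valid_word k is"
  shows "\<exists>N. (\<forall>\<tau>. pf k (N \<tau>)) \<and> (\<forall>\<tau> w. inj_on w {..<k} \<longrightarrow> Delta k w * coef q is \<tau> w = N \<tau> w)
     \<and> (\<forall>\<tau> c d w. c < k \<longrightarrow> d < k \<longrightarrow> c \<noteq> d \<longrightarrow> w c = w d \<longrightarrow>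
           N \<tau> w + N (Transposition.transpose c d \<circ> \<tau>) w = 0)"
  using assms
proof (induction "is")
  case Nil
  define N where "N = (\<lambda>(\<tau>::nat\<Rightarrow>nat) w. if \<tau> = id then Delta k w else (0::complex))"
  show ?case
  proof (intro exI[of _ N] conjI allI impI)
    fix \<tau> show "pf k (N \<tau>)" by (cases "\<tau> = id") (auto simp: N_def pf_Delta pf_const)
  next
    fix \<tau> w show "Delta k w * coef q [] \<tau> w = N \<tau> w" by (simp add: N_def)
  next
    fix \<tau> c d and w :: "nat \<Rightarrow> complex" assume "c < k" "d < k" "c \<noteq> d" "w c = w d"
    then have "Delta k w = 0" by (rule Delta_zero)
    then show "N \<tau> w + N (Transposition.transpose c d \<circ> \<tau>) w = 0" by (simp add: N_def)
  qed
next
  case (Cons i "is")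
  have v: "valid_word k is" "Suc i < k" using Cons.prems by (auto simp: valid_word_def)
  have ik: "i < k" using v by simp
  obtain N where N1: "\<And>\<tau>. pf k (N \<tau>)"
    and N2: "\<And>\<tau> w. inj_on w {..<k} \<Longrightarrow> Delta k w * coef q is \<tau> w = N \<tau> w"
    and N3: "\<And>\<tau> c d w. c < k \<Longrightarrow> d < k \<Longrightarrow> c \<noteq> d \<Longrightarrow> w c = w d \<Longrightarrow>
           N \<tau> w + N (Transposition.transpose c d \<circ> \<tau>) w = 0"
    using Cons.IH[OF v(1)] by blast
  define D where "D = (\<lambda>w::nat\<Rightarrow>complex. w (Suc i) - w i)"
  define E where "E = (\<lambda>w::nat\<Rightarrow>complex. w (Suc i) - of_real q * w i)"
  define Num where "Num = (\<lambda>\<tau> w. (of_real q * D w - E w) * N \<tau> w - E w * N (sigma i \<circ> \<tau>) (w \<circ> sigma i))"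
  have sl: "\<And>x. x < k \<Longrightarrow> sigma i x < k" using sigma_lt[OF v(2)] .
  have pfD: "pf k D" unfolding D_def using v by (intro pf_diff pf_var) auto
  have pfE: "pf k E" unfolding E_def using v by (intro pf_diff pf_mult pf_const pf_var) auto
  have pfNs: "pf k (\<lambda>w. P (w \<circ> sigma i))" if "pf k P" for P
    by (rule pf_comp[OF that sl])
  have pfNum: "pf k (Num \<tau>)" for \<tau>
  proof -
    have "pf k (\<lambda>w. (of_real q * D w - E w) * N \<tau> w - E w * N (sigma i \<circ> \<tau>) (w \<circ> sigma i))"
      by (intro pf_diff pf_mult pf_const pfD pfE N1 pfNs)
    then show ?thesis unfolding Num_def .
  qed
  have swap_eq: "u \<circ> sigma i = u" if "u i = u (Suc i)" for u :: "nat \<Rightarrow> complex"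
    using that by (intro ext) (auto simp: sigma_def Transposition.transpose_def)
  have sig_t: "sigma i = Transposition.transpose i (Suc i)" by (simp add: sigma_def)
  have Ninv: "N \<tau> u + N (sigma i \<circ> \<tau>) u = 0" if "u i = u (Suc i)" for \<tau> u
    unfolding sig_t by (rule N3) (use v that in auto)
  have Num0: "Num \<tau> u = 0" if "u i = u (Suc i)" for \<tau> u
  proof -
    have "Num \<tau> u = - E u * (N \<tau> u + N (sigma i \<circ> \<tau>) u)"
      by (simp add: Num_def D_def swap_eq[OF that] that algebra_simps)
    then show ?thesis using Ninv[OF that] by simp
  qed
  have fac: "\<exists>Q. pf k Q \<and> (\<forall>w. Num \<tau> w = D w * Q w)" for \<tau>
  proof -
    obtain Q where Q: "pf k Q" "\<forall>w. Num \<tau> w - Num \<tau> (w(Suc i := w i)) = (w (Suc i) - w i) * Q w"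
      using pf_factor[OF pfNum v(2) ik] by blast
    have "Num \<tau> w = D w * Q w" for w
      using Q(2)[rule_format, of w] Num0[of "w(Suc i := w i)" \<tau>] by (simp add: D_def)
    then show ?thesis using Q(1) by blast
  qed
  then have "\<forall>\<tau>. \<exists>Q. pf k Q \<and> (\<forall>w. Num \<tau> w = D w * Q w)" by blast
  then obtain Q where Q1: "\<And>\<tau>. pf k (Q \<tau>)" and Q2: "\<And>\<tau> w. Num \<tau> w = D w * Q \<tau> w"
    by (metis choice)
  have Dsig: "D (w \<circ> sigma i) = - D w" for w :: "nat \<Rightarrow> complex" by (simp add: D_def sigma_def)
  have sigsig: "sigma i \<circ> (sigma i \<circ> \<tau>) = \<tau>" for \<tau> by (simp add: o_assoc)
  show ?case
  proof (intro exI[of _ Q] conjI allI impI)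
    fix \<tau> show "pf k (Q \<tau>)" by (rule Q1)
  next
    fix \<tau> and w :: "nat \<Rightarrow> complex" assume inj: "inj_on w {..<k}"
    have Dnz: "D w \<noteq> 0" using inj v unfolding D_def by (auto dest: inj_onD)
    have injs: "inj_on (w \<circ> sigma i) {..<k}"
    proof (rule comp_inj_on)
      show "inj_on (sigma i) {..<k}" using inj_sigma by (rule inj_on_subset) simp
      show "inj_on w (sigma i ` {..<k})" using inj permutes_image[OF sigma_permutes[OF v(2)]] by simp
    qed
    have c1: "Delta k w * coef q is \<tau> w = N \<tau> w" by (rule N2[OF inj])
    have c2: "Delta k w * coef q is (sigma i \<circ> \<tau>) (w \<circ> sigma i) = - N (sigma i \<circ> \<tau>) (w \<circ> sigma i)"
      using N2[OF injs, of "sigma i \<circ> \<tau>"] Delta_sigma[OF v(2), of w] by (simp add: minus_equation_iff)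
    have BD: "D w * Bc q i w = E w" using Dnz by (simp add: Bc_def D_def E_def)
    have "Delta k w * coef q (i # is) \<tau> w
        = (of_real q - Bc q i w) * (Delta k w * coef q is \<tau> w)
          + Bc q i w * (Delta k w * coef q is (sigma i \<circ> \<tau>) (w \<circ> sigma i))"
      by (simp add: algebra_simps)
    also have "\<dots> = (of_real q - Bc q i w) * N \<tau> w + Bc q i w * (- N (sigma i \<circ> \<tau>) (w \<circ> sigma i))"
      by (simp only: c1 c2)
    finally have e1: "Delta k w * coef q (i # is) \<tau> w = \<dots>" .
    have "D w * (Delta k w * coef q (i # is) \<tau> w)
        = (of_real q * D w - D w * Bc q i w) * N \<tau> w - (D w * Bc q i w) * N (sigma i \<circ> \<tau>) (w \<circ> sigma i)"
      unfolding e1 by (simp add: algebra_simps)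
    also have "\<dots> = Num \<tau> w" unfolding BD Num_def ..
    also have "\<dots> = D w * Q \<tau> w" by (rule Q2)
    finally show "Delta k w * coef q (i # is) \<tau> w = Q \<tau> w" using Dnz by simp
  next
    fix \<tau> c d and w :: "nat \<Rightarrow> complex" assume cd: "c < k" "d < k" "c \<noteq> d" "w c = w d"
    let ?t = "Transposition.transpose c d"
    show "Q \<tau> w + Q (?t \<circ> \<tau>) w = 0"
    proof (cases "{c, d} = {i, Suc i}")
      case True
      then have t: "?t = sigma i" using cd(3)
        by (auto simp: sigma_def doubleton_eq_iff transpose_commute)
      have wi: "w i = w (Suc i)" using True cd(4) by (auto simp: doubleton_eq_iff)
      define M where "M = (\<lambda>w. N \<tau> w + N (sigma i \<circ> \<tau>) w)"
      have pfM: "pf k M" unfolding M_def by (intro pf_add N1)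
      obtain M1 where M1: "pf k M1" "\<forall>w. M w - M (w(Suc i := w i)) = (w (Suc i) - w i) * M1 w"
        using pf_factor[OF pfM v(2) ik] by blast
      have Mfac: "M u = D u * M1 u" for u
        using M1(2)[rule_format, of u] Ninv[of "u(Suc i := u i)" \<tau>] by (simp add: D_def M_def)
      define G where "G = (\<lambda>w. (of_real q * D w - E w) * M1 w + E w * M1 (w \<circ> sigma i))"
      have pfG: "pf k G" unfolding G_def
        by (intro pf_add pf_mult pf_diff pf_const pfD pfE M1(1) pfNs)
      have key: "D u * (Q \<tau> u + Q (sigma i \<circ> \<tau>) u) = D u * G u" for u
      proof -
        have "D u * (Q \<tau> u + Q (sigma i \<circ> \<tau>) u) = Num \<tau> u + Num (sigma i \<circ> \<tau>) u"
          by (simp add: Q2 algebra_simps)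
        also have "\<dots> = (of_real q * D u - E u) * M u - E u * M (u \<circ> sigma i)"
          by (simp add: Num_def M_def sigsig algebra_simps)
        also have "\<dots> = (of_real q * D u - E u) * (D u * M1 u) - E u * (D (u \<circ> sigma i) * M1 (u \<circ> sigma i))"
          by (simp only: Mfac)
        also have "\<dots> = D u * G u" by (simp add: Dsig G_def algebra_simps)
        finally show ?thesis .
      qed
      have H: "Q \<tau> w + Q (sigma i \<circ> \<tau>) w - G w = 0"
      proof (rule pf_density[where P = "\<lambda>w. Q \<tau> w + Q (sigma i \<circ> \<tau>) w - G w" and m = "Suc i"])
        show "pf k (\<lambda>w. Q \<tau> w + Q (sigma i \<circ> \<tau>) w - G w)" by (intro pf_diff pf_add Q1 pfG)
      next
        fix s :: complex assume "s \<noteq> 0"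
        let ?u = "w(Suc i := w (Suc i) + s)"
        have "D ?u \<noteq> 0" using \<open>s \<noteq> 0\<close> wi by (simp add: D_def)
        then show "Q \<tau> ?u + Q (sigma i \<circ> \<tau>) ?u - G ?u = 0" using key[of ?u] by simp
      qed
      have "G w = 0" using wi by (simp add: G_def D_def swap_eq algebra_simps)
      then show ?thesis using H t by simp
    next
      case False
      let ?t' = "Transposition.transpose (sigma i c) (sigma i d)"
      have st: "sigma i \<circ> (?t \<circ> \<tau>) = ?t' \<circ> (sigma i \<circ> \<tau>)"
        using comp_transpose[OF inj_sigma, of i c d] by (simp add: o_assoc)
      have key: "D u * (Q \<tau> u + Q (?t \<circ> \<tau>) u) = 0" if "u c = u d" for u
      proof -
        have z1: "N \<tau> u + N (?t \<circ> \<tau>) u = 0" by (rule N3) (use cd that in auto)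
        have z2: "N (sigma i \<circ> \<tau>) (u \<circ> sigma i) + N (?t' \<circ> (sigma i \<circ> \<tau>)) (u \<circ> sigma i) = 0"
        proof (rule N3)
          show "sigma i c < k" "sigma i d < k" using sl cd by auto
          show "sigma i c \<noteq> sigma i d" using cd(3) inj_sigma by (auto dest: injD)
          show "(u \<circ> sigma i) (sigma i c) = (u \<circ> sigma i) (sigma i d)" using that by simp
        qed
        have "D u * (Q \<tau> u + Q (?t \<circ> \<tau>) u) = Num \<tau> u + Num (?t \<circ> \<tau>) u"
          by (simp add: Q2 algebra_simps)
        also have "\<dots> = (of_real q * D u - E u) * (N \<tau> u + N (?t \<circ> \<tau>) u)
            - E u * (N (sigma i \<circ> \<tau>) (u \<circ> sigma i) + N (?t' \<circ> (sigma i \<circ> \<tau>)) (u \<circ> sigma i))"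
          unfolding Num_def st by (simp add: algebra_simps)
        also have "\<dots> = 0" by (simp only: z1 z2) simp
        finally show ?thesis .
      qed
      show ?thesis
      proof (cases "D w = 0")
        case False2: False
        then show ?thesis using key[OF cd(4)] by simp
      next
        case True
        define m where "m = (if i = c \<or> i = d then Suc i else i)"
        have mcd: "m \<noteq> c" "m \<noteq> d" using False cd(3) by (auto simp: m_def)
        show ?thesis
        proof (rule pf_density[where P = "\<lambda>w. Q \<tau> w + Q (?t \<circ> \<tau>) w" and m = m])
          show "pf k (\<lambda>w. Q \<tau> w + Q (?t \<circ> \<tau>) w)" by (intro pf_add Q1)
        next
          fix s :: complex assume "s \<noteq> 0"
          let ?u = "w(m := w m + s)"
          have "?u c = ?u d" using mcd cd(4) by simp
          moreover have "D ?u \<noteq> 0" using \<open>s \<noteq> 0\<close> True by (auto simp: D_def m_def)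
          ultimately show "Q \<tau> ?u + Q (?t \<circ> \<tau>) ?u = 0" using key[of ?u] by simp
        qed
      qed
    qed
  qed
qed


lemma inj_upd:
  assumes "inj_on w ({..<k} - {a})" "z \<notin> w ` ({..<k} - {a})"
  shows "inj_on (w(a := z)) {..<k}"
  using assms unfolding inj_on_def by (metis Diff_iff fun_upd_apply image_eqI singletonD)

lemma eventually_notin:
  fixes F :: "complex set"
  assumes "finite F"
  shows "\<forall>\<^sub>F z in at_infinity. z \<notin> F"
  unfolding eventually_at_infinity
proof (intro exI[of _ "(\<Sum>y\<in>F. norm y) + 1"] allI impI)
  fix z :: complex assume h: "(\<Sum>y\<in>F. norm y) + 1 \<le> norm z"
  show "z \<notin> F"
  proof
    assume "z \<in> F"
    then have "norm z \<le> (\<Sum>y\<in>F. norm y)" by (rule member_le_sum) (auto simp: assms)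
    then show False using h by simp
  qed
qed

theorem proposition3p3:
  fixes k :: nat and q :: real and \<pi> \<rho> :: "nat \<Rightarrow> nat" and "is" :: "nat list"
  assumes q: "0 < q" "q < 1"
    and pi: "\<pi> permutes {..<k}" and rho: "\<rho> permutes {..<k}"
    and red: "reduced_word k is \<pi>"
  shows
    "(\<exists>E c. finite E \<and>
        (\<forall>w. inj_on w {..<k} \<longrightarrow>
           (\<Prod>j<k. \<Prod>i<j. (w j - w i)) * kappa k q is \<rho> w
             = (\<Sum>e\<in>E. c e * (\<Prod>i<k. w i ^ e i))))
     \<and> (\<forall>a b w. a < b \<and> b < k \<and> inv \<rho> a > inv \<rho> b \<and> inj_on w {..<k}
           \<and> w b = of_real q * w a \<longrightarrow> kappa k q is \<rho> w = 0)
     \<and> (\<forall>a w. a < k \<and> \<pi> (inv \<rho> a) < a \<and> inj_on w {..<k} \<and> w a = 0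
           \<longrightarrow> kappa k q is \<rho> w = 0)
     \<and> (\<forall>a w. a < k \<and> \<pi> (inv \<rho> a) > a \<and> inj_on w ({..<k} - {a})
           \<longrightarrow> ((\<lambda>z. kappa k q is \<rho> (w(a := z))) \<longlongrightarrow> 0) at_infinity)"
proof (intro conjI allI impI)
  have v: "valid_word k is" and wp: "word_perm is = \<pi>" and ic: "inv_cnt k (word_perm is) = length is"
    using reduced_inv_cnt[OF red] by auto
  have qnz: "q \<noteq> 0" using q by simp
  show "\<exists>E c. finite E \<and>
        (\<forall>w. inj_on w {..<k} \<longrightarrow>
           (\<Prod>j<k. \<Prod>i<j. (w j - w i)) * kappa k q is \<rho> w
             = (\<Sum>e\<in>E. c e * (\<Prod>i<k. w i ^ e i)))"
  proof -
    obtain N where N1: "\<And>\<tau>. pf k (N \<tau>)"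
      and N2: "\<And>\<tau> w. inj_on w {..<k} \<Longrightarrow> Delta k w * coef q is \<tau> w = N \<tau> w"
      using coef_poly[OF v, of q] by blast
    obtain E c where Ec: "finite E" "\<forall>w. N \<rho> w = (\<Sum>e\<in>E. c e * (\<Prod>i<k. w i ^ e i))"
      using pf_mono_sum[OF N1[of \<rho>]] unfolding mono_sum_def by blast
    show ?thesis
    proof (intro exI[of _ E] exI[of _ c] conjI allI impI Ec(1))
      fix w :: "nat \<Rightarrow> complex" assume inj: "inj_on w {..<k}"
      have "(\<Prod>j<k. \<Prod>i<j. (w j - w i)) * kappa k q is \<rho> w = Delta k w * coef q is \<rho> w"
        by (simp add: Delta_def kappa_coef[OF v inj])
      also have "\<dots> = N \<rho> w" by (rule N2[OF inj])
      finally show "(\<Prod>j<k. \<Prod>i<j. (w j - w i)) * kappa k q is \<rho> w = (\<Sum>e\<in>E. c e * (\<Prod>i<k. w i ^ e i))"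
        using Ec(2) by simp
    qed
  qed
next
  fix a b and w :: "nat \<Rightarrow> complex"
  assume h: "a < b \<and> b < k \<and> inv \<rho> a > inv \<rho> b \<and> inj_on w {..<k} \<and> w b = of_real q * w a"
  have v: "valid_word k is" using reduced_inv_cnt[OF red] by auto
  show "kappa k q is \<rho> w = 0"
    using h kappa_coef[OF v, of w q \<rho>] coef_part2[OF v rho, of a b w q] by auto
next
  fix a and w :: "nat \<Rightarrow> complex"
  assume h: "a < k \<and> \<pi> (inv \<rho> a) < a \<and> inj_on w {..<k} \<and> w a = 0"
  have v: "valid_word k is" and wp: "word_perm is = \<pi>" and ic: "inv_cnt k (word_perm is) = length is"
    using reduced_inv_cnt[OF red] by auto
  show "kappa k q is \<rho> w = 0"
    using h kappa_coef[OF v, of w q \<rho>] coef_part3a[OF v ic rho, of a w q] wp by auto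
next
  fix a and w :: "nat \<Rightarrow> complex"
  assume h: "a < k \<and> \<pi> (inv \<rho> a) > a \<and> inj_on w ({..<k} - {a})"
  have v: "valid_word k is" and wp: "word_perm is = \<pi>" and ic: "inv_cnt k (word_perm is) = length is"
    using reduced_inv_cnt[OF red] by auto
  have qnz: "q \<noteq> 0" using q by simp
  have l: "((\<lambda>z. coef q is \<rho> (w(a := z))) \<longlongrightarrow> 0) at_infinity"
    using coef_part3b[OF qnz v ic rho, of a w] h wp by auto
  have ev: "\<forall>\<^sub>F z in at_infinity. coef q is \<rho> (w(a := z)) = kappa k q is \<rho> (w(a := z))"
  proof (rule eventually_mono)
    show "\<forall>\<^sub>F z in at_infinity. z \<notin> w ` ({..<k} - {a})" by (rule eventually_notin) simp
  next
    fix z assume "z \<notin> w ` ({..<k} - {a})"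
    then have "inj_on (w(a := z)) {..<k}" using h by (intro inj_upd) auto
    then show "coef q is \<rho> (w(a := z)) = kappa k q is \<rho> (w(a := z))"
      by (simp add: kappa_coef[OF v])
  qed
  show "((\<lambda>z. kappa k q is \<rho> (w(a := z))) \<longlongrightarrow> 0) at_infinity"
    by (rule Lim_transform_eventually[OF l ev])
qed


end
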